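(* Let $f:\mathit{Ref}\to\mathit{Expr}$ be a well-formed spreadsheet and let $\mathcal{L}=\{l : l \text{ is a label used in } f(r) \text{ for some } r\in\mathit{Ref}\}$. Then there are $|\mathcal{L}|$ or fewer random variables that cover all random variables used by the executions of $f$; i.e., every random draw made during any execution of $f$ (from the empty state $\emptyset$ to a state with domain $\mathit{Ref}$) is the draw at some labelled application whose label belongs to $\mathcal{L}$, and each such label is used for at most one draw per execution.
   Context: Expressions of the abstract spreadsheet language are generated by the grammar $$e ::= c \mid r \mid \mathit{op}_l(e_1,\dots,e_n) \mid \mathbf{if}\; e_1\, e_2\, e_3 \mid \mathbf{obs}(c, \mathit{erp}_l(e_1,\dots,e_n)),\qquad \mathit{op} ::= \mathit{prim} \mid \mathit{black} \mid \mathit{erp},$$ where $c$ ranges over constant numbers, $r$ over cell references, $l$ over labels (each application carries a unique label), $\mathit{prim}$ over deterministic primitive operators, $\mathit{black}$ over user-defined (possibly stochastic) black-box operators, and $\mathit{erp}$ over elementary random procedures (Gaussian, Choice, Between, Near). A spreadsheet is a finite map $f:\mathit{Ref}\to\mathit{Expr}$; it is well-formed if the directed graph on $\mathit{Ref}$ with edges $\{(r,r'): r\text{ occurs in } f(r')\}$ is acyclic. Fix a topological enumeration of $\mathit{Ref}$ and write $\prec$ for its order. A state $\rho$ is a map from a $\prec$-downward-closed subset $\mathrm{dom}(\rho)\subseteq\mathit{Ref}$ to numbers. Evaluation $e\Downarrow_\rho c,(p,q,\Lambda,L)$ evaluates expression $e$ in state $\rho$ to a number $c$, with $L$ the sequence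 of labels of the applications at which random values were sampled or observed: a reference $r$ evaluates to $\rho(r)$ with $L=[]$; $\mathit{prim}_l(e_1,\dots,e_n)$ evaluates the arguments and applies $\mathit{prim}$, with $L$ the concatenation of the arguments' sequences; $\mathit{black}_l(e_1,\dots,e_n)$ evaluates the arguments, samples $c\sim\mathit{black}(c_1,\dots,c_n)$, and has $L=\mathit{concat}(L_1,\dots,L_n,[l])$; $\mathit{erp}_l(e_1,\dots,e_n)$ evaluates the arguments, samples $c$ from a proposal distribution associated with $l$, and has $L=\mathit{concat}(L_1,\dots,L_n,[l])$; $\mathbf{if}\;e_1\,e_2\,e_3$ evaluates $e_1$ and then $e_2$ if the result is nonzero, otherwise $e_3$, with $L$ the concatenation of the two evaluated subexpressions' sequences; $\mathbf{obs}(c,\mathit{erp}_l(e_1,\dots,e_n))$ evaluates the arguments, returns $c$ and has $L=\mathit{concat}(L_1,\dots,L_n,[l])$. (The components $p,q$ are accumulated log densities and $\Lambda$ gradient information.) A one-step spreadsheet evaluation $\rho\xrightarrow{p,q,\Lambda,L}_f\rho'$ picks the $\prec$-least $r\in\mathit{Ref}\setminus\mathrm{dom}(\rho)$, evaluates $f(r)\Downarrow_\rho c,(p,q,\Lambda,L)$, and sets $\rho'=\rho[r:c]$. An execution of $f$ is a sequence $\emptyset=\rho_1\xrightarrow{}_f\rho_2\cdots\xrightarrow{}_f\rho_{m+1}$ with $\mathrm{dom}(\rho_{m+1})=\mathit{Ref}$; the random variables it uses are those sampled at the labels in the recorded sequences $L_1,\dots,L_m$. *)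

theory Defs
  imports Complex_Main
begin

text \<open>Expressions of the abstract spreadsheet language.
  'r: cell references, 'l: labels, 'p: primitive operators,
  'b: black-box operators, 'e: elementary random procedures.\<close>
datatype ('r, 'l, 'p, 'b, 'e) expr =
    Const real
  | Ref 'r
  | Prim 'p 'l "('r, 'l, 'p, 'b, 'e) expr list"
  | Black 'b 'l "('r, 'l, 'p, 'b, 'e) expr list"
  | Erp 'e 'l "('r, 'l, 'p, 'b, 'e) expr list"
  | If "('r, 'l, 'p, 'b, 'e) expr" "('r, 'l, 'p, 'b, 'e) expr" "('r, 'l, 'p, 'b, 'e) expr"
  | Obs real 'e 'l "('r, 'l, 'p, 'b, 'e) expr list"

fun refs :: "('r, 'l, 'p, 'b, 'e) expr \<Rightarrow> 'r set" where
  "refs (Const c) = {}"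
| "refs (Ref r) = {r}"
| "refs (Prim p l es) = (\<Union>e\<in>set es. refs e)"
| "refs (Black b l es) = (\<Union>e\<in>set es. refs e)"
| "refs (Erp d l es) = (\<Union>e\<in>set es. refs e)"
| "refs (If e1 e2 e3) = refs e1 \<union> refs e2 \<union> refs e3"
| "refs (Obs c d l es) = (\<Union>e\<in>set es. refs e)"

fun labels :: "('r, 'l, 'p, 'b, 'e) expr \<Rightarrow> 'l list" where
  "labels (Const c) = []"
| "labels (Ref r) = []"
| "labels (Prim p l es) = concat (map labels es) @ [l]"
| "labels (Black b l es) = concat (map labels es) @ [l]"
| "labels (Erp d l es) = concat (map labels es) @ [l]"
| "labels (If e1 e2 e3) = labels e1 @ labels e2 @ labels e3"
| "labels (Obs c d l es) = concat (map labels es) @ [l]"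

definition dep_graph :: "('r \<Rightarrow> ('r, 'l, 'p, 'b, 'e) expr) \<Rightarrow> ('r \<times> 'r) set" where
  "dep_graph f = {(r, r'). r \<in> refs (f r')}"

definition well_formed :: "('r \<Rightarrow> ('r, 'l, 'p, 'b, 'e) expr) \<Rightarrow> bool" where
  "well_formed f \<longleftrightarrow> acyclic (dep_graph f)"

definition unique_labels :: "('r::finite \<Rightarrow> ('r, 'l, 'p, 'b, 'e) expr) \<Rightarrow> bool" where
  "unique_labels f \<longleftrightarrow>
     (\<forall>r. distinct (labels (f r))) \<and>
     (\<forall>r r'. r \<noteq> r' \<longrightarrow> set (labels (f r)) \<inter> set (labels (f r')) = {})"

definition used_labels :: "('r \<Rightarrow> ('r, 'l, 'p, 'b, 'e) expr) \<Rightarrow> 'l set" where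
  "used_labels f = (\<Union>r. set (labels (f r)))"

definition topo_enum :: "('r \<Rightarrow> ('r, 'l, 'p, 'b, 'e) expr) \<Rightarrow> 'r list \<Rightarrow> bool" where
  "topo_enum f ord \<longleftrightarrow> distinct ord \<and> set ord = UNIV \<and>
     (\<forall>r r'. r \<in> refs (f r') \<longrightarrow>
        (\<exists>i j. i < j \<and> j < length ord \<and> ord ! i = r \<and> ord ! j = r'))"

text \<open>Big-step evaluation  e \<Down>_\<rho> c, L  (only the value and the label sequence are
  tracked; the log densities and gradient information do not influence L).
  Random samples (black-box and ERP proposals) may be arbitrary reals; prim gives the
  semantics of the deterministic primitive operators.\<close>
inductive eval :: "('p \<Rightarrow> real list \<Rightarrow> real) \<Rightarrow> ('r \<rightharpoonup> real) \<Rightarrow> ('r, 'l, 'p, 'b, 'e) expr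
                    \<Rightarrow> real \<Rightarrow> 'l list \<Rightarrow> bool"
  and evals :: "('p \<Rightarrow> real list \<Rightarrow> real) \<Rightarrow> ('r \<rightharpoonup> real) \<Rightarrow> ('r, 'l, 'p, 'b, 'e) expr list
                    \<Rightarrow> real list \<Rightarrow> 'l list list \<Rightarrow> bool"
  for prim :: "'p \<Rightarrow> real list \<Rightarrow> real" and \<rho> :: "'r \<rightharpoonup> real"
where
  ev_const: "eval prim \<rho> (Const c) c []"
| ev_ref: "\<rho> r = Some c \<Longrightarrow> eval prim \<rho> (Ref r) c []"
| ev_prim: "evals prim \<rho> es cs Ls \<Longrightarrow> eval prim \<rho> (Prim p l es) (prim p cs) (concat Ls)"
| ev_black: "evals prim \<rho> es cs Ls \<Longrightarrow> eval prim \<rho> (Black b l es) c (concat Ls @ [l])"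
| ev_erp: "evals prim \<rho> es cs Ls \<Longrightarrow> eval prim \<rho> (Erp d l es) c (concat Ls @ [l])"
| ev_if_true: "eval prim \<rho> e1 c1 L1 \<Longrightarrow> c1 \<noteq> 0 \<Longrightarrow> eval prim \<rho> e2 c2 L2
                 \<Longrightarrow> eval prim \<rho> (If e1 e2 e3) c2 (L1 @ L2)"
| ev_if_false: "eval prim \<rho> e1 c1 L1 \<Longrightarrow> c1 = 0 \<Longrightarrow> eval prim \<rho> e3 c3 L3
                 \<Longrightarrow> eval prim \<rho> (If e1 e2 e3) c3 (L1 @ L3)"
| ev_obs: "evals prim \<rho> es cs Ls \<Longrightarrow> eval prim \<rho> (Obs c d l es) c (concat Ls @ [l])"
| evs_nil: "evals prim \<rho> [] [] []"
| evs_cons: "eval prim \<rho> e c L \<Longrightarrow> evals prim \<rho> es cs Ls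
              \<Longrightarrow> evals prim \<rho> (e # es) (c # cs) (L # Ls)"

definition step :: "('p \<Rightarrow> real list \<Rightarrow> real) \<Rightarrow> ('r \<Rightarrow> ('r, 'l, 'p, 'b, 'e) expr) \<Rightarrow> 'r list
                    \<Rightarrow> ('r \<rightharpoonup> real) \<Rightarrow> 'l list \<Rightarrow> ('r \<rightharpoonup> real) \<Rightarrow> bool" where
  "step prim f ord \<rho> L \<rho>' \<longleftrightarrow>
     (\<exists>r c. find (\<lambda>x. x \<notin> dom \<rho>) ord = Some r \<and> eval prim \<rho> (f r) c L \<and> \<rho>' = \<rho>(r \<mapsto> c))"

definition execution :: "('p \<Rightarrow> real list \<Rightarrow> real) \<Rightarrow> ('r \<Rightarrow> ('r, 'l, 'p, 'b, 'e) expr) \<Rightarrow> 'r list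
                    \<Rightarrow> ('r \<rightharpoonup> real) list \<Rightarrow> 'l list list \<Rightarrow> bool" where
  "execution prim f ord \<rho>s Ls \<longleftrightarrow>
     length \<rho>s = Suc (length Ls) \<and> \<rho>s ! 0 = Map.empty \<and>
     (\<forall>i < length Ls. step prim f ord (\<rho>s ! i) (Ls ! i) (\<rho>s ! Suc i)) \<and>
     dom (last \<rho>s) = UNIV"

end

theory Submission
  imports Defs "HOL-Library.Sublist"
begin

lemma subseq_set: "subseq xs ys \<Longrightarrow> set xs \<subseteq> set ys"
  by (induct rule: list_emb.induct) auto

lemma subseq_dist: "subseq xs ys \<Longrightarrow> distinct ys \<Longrightarrow> distinct xs"
  by (induct rule: list_emb.induct) (auto dest: subseq_set)

lemma ev_sub:
  fixes prim :: "'p \<Rightarrow> real list \<Rightarrow> real" and \<rho> :: "'r \<rightharpoonup> real"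
    and e :: "('r, 'l, 'p, 'b, 'e) expr" and es :: "('r, 'l, 'p, 'b, 'e) expr list"
  shows
  "eval prim \<rho> e c L \<Longrightarrow> subseq L (labels e)"
  "evals prim \<rho> es cs Ls \<Longrightarrow> subseq (concat Ls) (concat (map labels es))"
proof (induct rule: eval_evals.inducts)
  case (ev_if_true e1 c1 L1 e2 c2 L2 e3)
  then have "subseq L2 (labels e2 @ labels e3)"
    by (metis append_Nil2 list_emb_append_mono list_emb_Nil)
  then show ?case using ev_if_true by (simp add: list_emb_append_mono)
next
  case (ev_if_false e1 c1 L1 e3 c3 L3 e2)
  then have "subseq L3 (labels e2 @ labels e3)"
    by (metis list_emb_append2)
  then show ?case using ev_if_false by (simp add: list_emb_append_mono)
qed (auto simp: list_emb_append_mono subseq_append')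

lemma distinct_concat_idx:
  "(\<forall>i<length xs. distinct (xs!i)) \<Longrightarrow>
   (\<forall>i j. i<j \<and> j<length xs \<longrightarrow> set (xs!i) \<inter> set (xs!j) = {}) \<Longrightarrow>
   distinct (concat xs)"
proof (induction xs)
  case Nil then show ?case by simp
next
  case (Cons a xs)
  have IH: "distinct (concat xs)"
    apply (rule Cons.IH)
    using Cons.prems(1) apply (metis Suc_less_eq length_Cons nth_Cons_Suc)
    using Cons.prems(2) by (metis Suc_less_eq length_Cons nth_Cons_Suc)
  have "set a \<inter> set (concat xs) = {}"
  proof -
    { fix x assume "x \<in> set a" "x \<in> set (concat xs)"
      then obtain j where j: "j < length xs" "x \<in> set (xs!j)"
        by (metis in_set_conv_nth set_concat UN_iff)
      have "set ((a#xs)!0) \<inter> set ((a#xs)!Suc j) = {}"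
        using Cons.prems(2) j by (metis Suc_less_eq length_Cons zero_less_Suc)
      with j \<open>x \<in> set a\<close> have False by auto }
    then show ?thesis by blast
  qed
  then show ?case using IH Cons.prems(1) by auto
qed

theorem mainTheorem2:
  fixes f :: "'r::finite \<Rightarrow> ('r, 'l, 'p, 'b, 'e) expr"
    and ord :: "'r list"
    and prim :: "'p \<Rightarrow> real list \<Rightarrow> real"
  assumes "well_formed f"
    and "unique_labels f"
    and "topo_enum f ord"
    and "execution prim f ord \<rho>s Ls"
  shows "set (concat Ls) \<subseteq> used_labels f \<and> distinct (concat Ls)
         \<and> length (concat Ls) \<le> card (used_labels f)"
proof -
  have ex: "length \<rho>s = Suc (length Ls)"
    "\<And>i. i < length Ls \<Longrightarrow> step prim f ord (\<rho>s ! i) (Ls ! i) (\<rho>s ! Suc i)"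
    using assms(4) unfolding execution_def by auto
  have "\<forall>i. \<exists>r. i < length Ls \<longrightarrow> r \<notin> dom (\<rho>s ! i) \<and> subseq (Ls!i) (labels (f r))
          \<and> dom (\<rho>s ! Suc i) = insert r (dom (\<rho>s ! i))"
  proof
    fix i
    show "\<exists>r. i < length Ls \<longrightarrow> r \<notin> dom (\<rho>s ! i) \<and> subseq (Ls!i) (labels (f r))
          \<and> dom (\<rho>s ! Suc i) = insert r (dom (\<rho>s ! i))"
    proof (cases "i < length Ls")
      case True
      then obtain r c where "find (\<lambda>x. x \<notin> dom (\<rho>s ! i)) ord = Some r"
        "eval prim (\<rho>s ! i) (f r) c (Ls!i)" "\<rho>s ! Suc i = (\<rho>s ! i)(r \<mapsto> c)"
        using ex(2) unfolding step_def by blast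
      then show ?thesis using ev_sub(1) by (force simp: find_Some_iff)
    qed simp
  qed
  then obtain R where R: "\<And>i. i < length Ls \<Longrightarrow> R i \<notin> dom (\<rho>s ! i) \<and> subseq (Ls!i) (labels (f (R i)))
          \<and> dom (\<rho>s ! Suc i) = insert (R i) (dom (\<rho>s ! i))"
    by metis
  have mono: "i < length Ls \<Longrightarrow> R i \<in> dom (\<rho>s ! (Suc i + k))" if "Suc i + k \<le> length Ls" for i k
    using that
  proof (induction k)
    case 0 then show ?case using R by auto
  next
    case (Suc k)
    then have "Suc i + k < length Ls" by simp
    with Suc R[of "Suc i + k"] show ?case by auto
  qed
  have distR: "R i \<noteq> R j" if "i < j" "j < length Ls" for i j
  proof -
    obtain k where k: "j = Suc i + k" using \<open>i<j\<close> less_iff_Suc_add by auto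
    have "R i \<in> dom (\<rho>s ! j)" using mono[of i k] k that by auto
    then show ?thesis using R[of j] that by auto
  qed
  have ul: "\<And>r. distinct (labels (f r))"
    "\<And>r r'. r \<noteq> r' \<Longrightarrow> set (labels (f r)) \<inter> set (labels (f r')) = {}"
    using assms(2) unfolding unique_labels_def by auto
  have sub: "set (Ls!i) \<subseteq> set (labels (f (R i)))" if "i < length Ls" for i
    using R[OF that] subseq_set by blast
  have s1: "set (concat Ls) \<subseteq> used_labels f"
  proof
    fix x assume "x \<in> set (concat Ls)"
    then obtain i where "i < length Ls" "x \<in> set (Ls!i)"
      by (metis in_set_conv_nth set_concat UN_iff)
    then show "x \<in> used_labels f" using sub unfolding used_labels_def by blast
  qed
  have s2: "distinct (concat Ls)"
  proof (rule distinct_concat_idx)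
    show "\<forall>i<length Ls. distinct (Ls ! i)"
      using R ul(1) subseq_dist by blast
    show "\<forall>i j. i < j \<and> j < length Ls \<longrightarrow> set (Ls ! i) \<inter> set (Ls ! j) = {}"
    proof (intro allI impI)
      fix i j assume "i < j \<and> j < length Ls"
      then show "set (Ls ! i) \<inter> set (Ls ! j) = {}"
        using sub[of i] sub[of j] ul(2)[OF distR[of i j]] by auto
    qed
  qed
  have fin: "finite (used_labels f)" unfolding used_labels_def by simp
  have "length (concat Ls) = card (set (concat Ls))" using s2 by (metis distinct_card)
  also have "\<dots> \<le> card (used_labels f)" using card_mono[OF fin s1] .
  finally show ?thesis using s1 s2 by simp
qed

end
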